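(* Let $f_0(1)=0$ and $f_0(n)=1$ for $n\ge2$, and let $m\ge1$. For $n>3$ and $1\le k\le\lfloor n/2\rfloor$, $c_m(n,k)$ equals the number of words of length $n-3$ over the alphabet $\{0,1,\ldots,m\}$ with exactly $k-1$ letters equal to $1$ and in which all nonzero letters are isolated (no two nonzero letters are adjacent). Moreover, for $1\le k\le\lfloor n/2\rfloor$, \[c_m(n,k)=\sum_{j=0}^{\lfloor\frac{n}{2}\rfloor-k}(m-1)^{j}\binom{j+k-1}{k-1}\binom{n-k-j-1}{k+j-1},\] and $c_m(n,k)=0$ when $\lfloor n/2\rfloor<k\le n$.
   Context: For $m\ge 1$, $f_m$ is the invert transform of $f_{m-1}$, i.e. $f_m(n)=f_{m-1}(n)+\sum_{i=1}^{n-1}f_{m-1}(i)f_m(n-i)$ for $n\ge1$. For $m\ge1$ the numbers $c_m(n,k)$, $0\le k\le n$, are defined by $c_m(0,0)=1$, $c_m(n,0)=0$ for $n\ge1$, and $c_m(n,k)=\sum_{i=1}^{n-k+1}f_{m-1}(i)\,c_m(n-i,k-1)$ for $1\le k\le n$. The convention $0^0=1$ is used. *)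

theory Defs
  imports Main
begin

text \<open>Invert transform of a sequence g (indexed from 1):
  inv_tr g n = g n + (\<Sum>i=1..n-1. g i * inv_tr g (n-i)) for n \<ge> 1; value at 0 is irrelevant (set to 0).\<close>
function inv_tr :: "(nat \<Rightarrow> nat) \<Rightarrow> nat \<Rightarrow> nat" where
  "inv_tr g n = (if n = 0 then 0 else g n + (\<Sum>i\<in>{1..n-1}. g i * inv_tr g (n - i)))"
  by auto
termination
  by (relation "measure (\<lambda>(g, n). n)") auto

definition f0 :: "nat \<Rightarrow> nat" where
  "f0 n = (if n \<le> 1 then 0 else 1)"

fun f :: "nat \<Rightarrow> nat \<Rightarrow> nat" where
  "f 0 = f0"
| "f (Suc m) = inv_tr (f m)"

text \<open>The triangle attached to a sequence g: cc g 0 0 = 1, cc g n 0 = 0 (n \<ge> 1),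
  cc g n k = \<Sum>i=1..n-k+1. g i * cc g (n-i) (k-1) for 1 \<le> k \<le> n
  (and 0 for k > n, a range not covered by the paper's definition).\<close>
fun cc :: "(nat \<Rightarrow> nat) \<Rightarrow> nat \<Rightarrow> nat \<Rightarrow> nat" where
  "cc g n 0 = (if n = 0 then 1 else 0)"
| "cc g n (Suc k) = (if Suc k \<le> n then (\<Sum>i\<in>{1..n - Suc k + 1}. g i * cc g (n - i) k) else 0)"

definition c :: "nat \<Rightarrow> nat \<Rightarrow> nat \<Rightarrow> nat" where
  "c m n k = cc (f (m - 1)) n k"

definition words :: "nat \<Rightarrow> nat \<Rightarrow> nat \<Rightarrow> nat list set" where
  "words m L j = {w. length w = L \<and> set w \<subseteq> {0..m} \<and> count_list w 1 = j \<and>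
      (\<forall>i. Suc i < length w \<longrightarrow> w ! i = 0 \<or> w ! Suc i = 0)}"

end

theory Submission
  imports Defs "HOL-Computational_Algebra.Formal_Power_Series"
begin

unbundle fps_syntax

declare inv_tr.simps[simp del]

lemma inv_tr_0[simp]: "inv_tr g 0 = 0" by (simp add: inv_tr.simps)

lemma f_0[simp]: "f a 0 = 0"
  by (cases a) (auto simp: f0_def inv_tr.simps)

lemma cc_zero: "n < k \<Longrightarrow> cc g n k = 0"
  by (cases k) auto

lemma cc_conv:
  assumes "g 0 = 0"
  shows "cc g n (Suc k) = (\<Sum>i=0..n. g i * cc g (n-i) k)"
proof (cases "Suc k \<le> n")
  case True
  have "(\<Sum>i=0..n. g i * cc g (n-i) k) = (\<Sum>i\<in>{1..n - Suc k + 1}. g i * cc g (n - i) k)"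
  proof (rule sum.mono_neutral_right)
    show "\<forall>i\<in>{0..n} - {1..n - Suc k + 1}. g i * cc g (n - i) k = 0"
    proof
      fix i assume "i \<in> {0..n} - {1..n - Suc k + 1}"
      then have "i = 0 \<or> n - i < k" by auto
      then show "g i * cc g (n - i) k = 0" using assms by (auto simp: cc_zero)
    qed
  qed (use True in auto)
  then show ?thesis using True by simp
next
  case False
  have "(\<Sum>i=0..n. g i * cc g (n-i) k) = 0"
  proof (intro sum.neutral ballI)
    fix i assume "i \<in> {0..n}"
    then have "i = 0 \<or> n - i < k" using False by auto
    then show "g i * cc g (n - i) k = 0" using assms by (auto simp: cc_zero)
  qed
  then show ?thesis using False by simp
qed

definition Hf :: "(nat \<Rightarrow> nat) \<Rightarrow> int fps" where
  "Hf g = Abs_fps (\<lambda>n. int (g n))"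

lemma cc_pow:
  assumes "g 0 = 0"
  shows "Abs_fps (\<lambda>n. int (cc g n k)) = Hf g ^ k"
proof (induction k)
  case 0
  then show ?case by (auto simp: fps_eq_iff)
next
  case (Suc k)
  have "Abs_fps (\<lambda>n. int (cc g n (Suc k))) = Hf g * Abs_fps (\<lambda>n. int (cc g n k))"
    apply (rule fps_ext)
    apply (subst fps_nth_Abs_fps)
    apply (subst cc_conv[where g=g, OF assms])
    apply (simp add: fps_mult_nth Hf_def)
    done
  then show ?case using Suc by (simp add: mult.commute)
qed

lemma f_Suc_fps: "Hf (f (Suc a)) = Hf (f a) + Hf (f a) * Hf (f (Suc a))"
proof (rule fps_ext)
  fix n
  show "Hf (f (Suc a)) $ n = (Hf (f a) + Hf (f a) * Hf (f (Suc a))) $ n"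
  proof (cases "n = 0")
    case True then show ?thesis by (simp add: Hf_def inv_tr.simps)
  next
    case False
    then obtain p where n: "n = Suc p" by (cases n) auto
    have "(\<Sum>i=0..n. int (f a i) * int (f (Suc a) (n - i)))
        = (\<Sum>i=1..n. int (f a i) * int (f (Suc a) (n - i)))"
      by (simp add: sum.atLeast_Suc_atMost)
    also have "\<dots> = (\<Sum>i=1..p. int (f a i) * int (f (Suc a) (n - i)))"
      using n by (simp add: sum.cl_ivl_Suc)
    finally have e: "(\<Sum>i=0..n. int (f a i) * int (f (Suc a) (n - i)))
        = (\<Sum>i=1..n-1. int (f a i) * int (f (Suc a) (n - i)))" using n by simp
    have "int (f (Suc a) n) = int (f a n) + (\<Sum>i=1..n-1. int (f a i) * int (f (Suc a) (n - i)))"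
      using False by (simp add: inv_tr.simps[of "f a" n])
    then show ?thesis using e by (simp add: Hf_def fps_mult_nth)
  qed
qed

lemma F_closed: "Hf (f a) * (1 - of_nat a * Hf (f 0)) = Hf (f 0)"
proof (induction a)
  case 0 then show ?case by simp
next
  case (Suc a)
  let ?P = "Hf (f (Suc a))" and ?F = "Hf (f a)" and ?Z = "Hf (f 0)"
  have p: "?P * (1 - ?F) = ?F" using f_Suc_fps[of a] by (simp add: algebra_simps)
  have q: "(1 - ?F) * (1 - of_nat a * ?Z) = 1 - of_nat (Suc a) * ?Z"
    using Suc by (simp add: algebra_simps)
  have "?P * (1 - of_nat (Suc a) * ?Z) = (?P * (1 - ?F)) * (1 - of_nat a * ?Z)"
    by (simp only: q[symmetric] mult.assoc)
  also have "\<dots> = ?F * (1 - of_nat a * ?Z)" by (simp only: p)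
  also have "\<dots> = ?Z" by (rule Suc)
  finally show ?case .
qed

lemma F0_closed: "Hf (f 0) * (1 - fps_X) = fps_X ^ 2"
proof (rule fps_ext)
  fix n
  have "(Hf (f 0) * (1 - fps_X)) = Hf (f 0) - fps_X * Hf (f 0)" by (simp add: algebra_simps)
  then show "(Hf (f 0) * (1 - fps_X)) $ n = (fps_X ^ 2 :: int fps) $ n"
    by (auto simp: Hf_def f0_def fps_X_power_nth)
qed

lemma H_closed: "Hf (f a) * (1 - fps_X - of_nat a * fps_X ^ 2) = fps_X ^ 2"
proof -
  have "Hf (f a) * (1 - fps_X - of_nat a * fps_X ^ 2) = 
     Hf (f a) * (1 - fps_X) - of_nat a * Hf (f a) * (Hf (f 0) * (1 - fps_X))"
    by (simp only: F0_closed) (simp add: algebra_simps)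
  also have "\<dots> = (Hf (f a) * (1 - of_nat a * Hf (f 0))) * (1 - fps_X)"
    by (simp add: algebra_simps)
  also have "\<dots> = fps_X ^ 2" using F_closed F0_closed by simp
  finally show ?thesis .
qed

lemma cc_rec: "cc (f a) (n+2) (Suc k) = cc (f a) (n+1) (Suc k) + a * cc (f a) n (Suc k) + cc (f a) n k"
proof -
  let ?C = "\<lambda>k. Abs_fps (\<lambda>n. int (cc (f a) n k))"
  have C: "\<And>j. ?C j = Hf (f a) ^ j" by (rule cc_pow) simp
  have "?C (Suc k) * (1 - fps_X - of_nat a * fps_X ^ 2) = ?C k * (Hf (f a) * (1 - fps_X - of_nat a * fps_X ^ 2))"
    by (simp only: C power_Suc mult_ac)
  also have "\<dots> = ?C k * fps_X ^ 2" by (simp only: H_closed)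
  finally have "?C (Suc k) * (1 - fps_X - of_nat a * fps_X ^ 2) = ?C k * fps_X ^ 2" .
  hence "(?C (Suc k) * (1 - fps_X - of_nat a * fps_X ^ 2)) $ (n+2) = (?C k * fps_X ^ 2) $ (n+2)"
    by simp
  moreover have "?C (Suc k) * (1 - fps_X - of_nat a * fps_X ^ 2)
     = ?C (Suc k) - fps_X * ?C (Suc k) - fps_const (of_nat a) * (fps_X^2 * ?C (Suc k))"
    by (simp add: algebra_simps fps_of_nat)
  ultimately have "int (cc (f a) (n+2) (Suc k)) - int (cc (f a) (n+1) (Suc k)) - int a * int (cc (f a) n (Suc k))
     = int (cc (f a) n k)"
    by (simp add: fps_X_power_mult_nth fps_X_power_mult_right_nth)
  then have "int (cc (f a) (n+2) (Suc k)) = int (cc (f a) (n+1) (Suc k) + a * cc (f a) n (Suc k) + cc (f a) n k)"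
    by simp
  then show ?thesis by (simp only: of_nat_eq_iff)
qed


lemma f_1[simp]: "f a (Suc 0) = 0"
  by (induction a) (auto simp: f0_def inv_tr.simps)

lemma cc_1[simp]: "cc (f a) (Suc 0) k = 0"
proof (cases k)
  case (Suc k') then show ?thesis by (cases k') auto
qed simp

lemma cc_0S[simp]: "cc g 0 (Suc k) = 0" by simp

declare cc.simps(2)[simp del]

lemma cc_small: "n < 2 * k \<Longrightarrow> cc (f a) n k = 0"
proof (induction n arbitrary: k rule: less_induct)
  case (less n)
  show ?case
  proof (cases "n < 2")
    case True
    then have "n = 0 \<or> n = 1" by auto
    then show ?thesis using less.prems by (cases k) auto
  next
    case False
    then obtain n' where n: "n = n' + 2" by (metis add.commute le_Suc_ex not_less)
    obtain k' where k: "k = Suc k'" using less.prems by (cases k) auto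
    have "cc (f a) (n'+1) (Suc k') = 0" "cc (f a) n' (Suc k') = 0" "cc (f a) n' k' = 0"
      using less.IH less.prems n k by auto
    then show ?thesis using cc_rec[of a n' k'] n k by simp
  qed
qed

definition E :: "nat \<Rightarrow> nat \<Rightarrow> nat \<Rightarrow> nat" where
  "E a p r = (\<Sum>j=0..r div 2. a ^ j * ((p + j) choose p) * ((p + r - j) choose (p + j)))"

lemma E_ext:
  assumes "r div 2 \<le> N"
  shows "E a p r = (\<Sum>j=0..N. a ^ j * ((p + j) choose p) * ((p + r - j) choose (p + j)))"
  unfolding E_def
proof (rule sum.mono_neutral_left)
  show "\<forall>i\<in>{0..N} - {0..r div 2}. a ^ i * (p + i choose p) * (p + r - i choose (p + i)) = 0"
  proof
    fix i assume "i \<in> {0..N} - {0..r div 2}"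
    then have "p + r - i < p + i" by auto
    then show "a ^ i * (p + i choose p) * (p + r - i choose (p + i)) = 0" by simp
  qed
qed (use assms in auto)

lemma E0[simp]: "E a p 0 = 1" by (simp add: E_def)
lemma E1[simp]: "E a p (Suc 0) = Suc p" by (simp add: E_def)

lemma E_rec0: "E a 0 (r+2) = E a 0 (r+1) + a * E a 0 r"
proof -
  have "E a 0 (r+2) = (\<Sum>j=0..r+1. a ^ j * ((r + 2 - j) choose j))"
    by (subst E_ext[of _ "r+1"]) auto
  also have "\<dots> = (\<Sum>j=0..r+1. a ^ j * ((r + 1 - j) choose j)) + (\<Sum>j=1..r+1. a ^ j * ((r + 1 - j) choose (j - 1)))"
  proof -
    have "(\<Sum>j=0..r+1. a ^ j * ((r + 2 - j) choose j)) = (\<Sum>j=0..r+1. a ^ j * ((r + 1 - j) choose j) + (if j = 0 then 0 else a ^ j * ((r + 1 - j) choose (j - 1))))"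
    proof (rule sum.cong)
      fix j assume "j \<in> {0..r+1}"
      then have "r + 2 - j = Suc (r + 1 - j)" by auto
      then show "a ^ j * ((r + 2 - j) choose j) = a ^ j * ((r + 1 - j) choose j) + (if j = 0 then 0 else a ^ j * ((r + 1 - j) choose (j - 1)))"
        by (cases j) (auto simp: algebra_simps)
    qed simp
    also have "\<dots> = (\<Sum>j=0..r+1. a ^ j * ((r + 1 - j) choose j)) + (\<Sum>j=0..r+1. (if j = 0 then 0 else a ^ j * ((r + 1 - j) choose (j - 1))))"
      by (rule sum.distrib)
    also have "(\<Sum>j=0..r+1. (if j = 0 then 0 else a ^ j * ((r + 1 - j) choose (j - 1)))) = (\<Sum>j=1..r+1. a ^ j * ((r + 1 - j) choose (j - 1)))"
      by (simp add: sum.atLeast_Suc_atMost)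
    finally show ?thesis .
  qed
  also have "(\<Sum>j=1..r+1. a ^ j * ((r + 1 - j) choose (j - 1))) = (\<Sum>i=0..r. a ^ Suc i * ((r - i) choose i))"
    using sum.shift_bounds_cl_Suc_ivl[of "\<lambda>j. a ^ j * ((r + 1 - j) choose (j - 1))" 0 r] by simp
  also have "\<dots> = a * E a 0 r"
    by (subst E_ext[of _ r]) (auto simp: sum_distrib_left mult.assoc)
  also have "(\<Sum>j=0..r+1. a ^ j * ((r + 1 - j) choose j)) = E a 0 (r+1)"
    by (subst E_ext[of _ "r+1"]) auto
  finally show ?thesis .
qed

lemma E_rec: "E a (Suc q) (r+2) = E a (Suc q) (r+1) + a * E a (Suc q) r + E a q (r+2)"
proof -
  define T where "T = (\<lambda>j. a ^ j * ((q + j) choose Suc q) * ((q + r + 2 - j) choose (q + j)))"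
  have "E a (Suc q) (r+2) = (\<Sum>j=0..r+2. a ^ j * ((Suc q + j) choose Suc q) * ((Suc q + (r+2) - j) choose (Suc q + j)))"
    by (subst E_ext[of _ "r+2"]) auto
  also have "\<dots> = (\<Sum>j=0..r+2. a ^ j * ((Suc q + j) choose Suc q) * ((Suc q + (r+1) - j) choose (Suc q + j))
      + a ^ j * ((q + j) choose q) * ((q + (r+2) - j) choose (q + j)) + T j)"
  proof (rule sum.cong)
    fix j assume "j \<in> {0..r+2}"
    then have e1: "Suc q + (r+2) - j = Suc (q + r + 2 - j)" and e2: "Suc q + (r+1) - j = q + r + 2 - j"
      and e3: "q + (r+2) - j = q + r + 2 - j" by auto
    have b1: "(Suc (q + r + 2 - j) choose (Suc q + j)) = ((q + r + 2 - j) choose (Suc q + j)) + ((q + r + 2 - j) choose (q + j))"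
      by (simp add: binomial_Suc_Suc)
    have b2: "((Suc q + j) choose Suc q) = ((q + j) choose q) + ((q + j) choose Suc q)"
      by (simp add: binomial_Suc_Suc)
    have L: "a ^ j * ((Suc q + j) choose Suc q) * ((Suc q + (r+2) - j) choose (Suc q + j)) =
      a ^ j * (((q + j) choose q) + ((q + j) choose Suc q)) * (((q + r + 2 - j) choose (Suc q + j)) + ((q + r + 2 - j) choose (q + j)))"
      by (simp only: e1 b1 b2)
    have R: "a ^ j * ((Suc q + j) choose Suc q) * ((Suc q + (r+1) - j) choose (Suc q + j))
      + a ^ j * ((q + j) choose q) * ((q + (r+2) - j) choose (q + j)) + T j =
      a ^ j * (((q + j) choose q) + ((q + j) choose Suc q)) * ((q + r + 2 - j) choose (Suc q + j))
      + a ^ j * ((q + j) choose q) * ((q + r + 2 - j) choose (q + j)) + a ^ j * ((q + j) choose Suc q) * ((q + r + 2 - j) choose (q + j))"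
      by (simp only: e2 e3 b2 T_def)
    show "a ^ j * ((Suc q + j) choose Suc q) * ((Suc q + (r+2) - j) choose (Suc q + j)) =
      a ^ j * ((Suc q + j) choose Suc q) * ((Suc q + (r+1) - j) choose (Suc q + j))
      + a ^ j * ((q + j) choose q) * ((q + (r+2) - j) choose (q + j)) + T j"
      unfolding L R by (simp only: algebra_simps)
  qed simp
  also have "\<dots> = (\<Sum>j=0..r+2. a ^ j * ((Suc q + j) choose Suc q) * ((Suc q + (r+1) - j) choose (Suc q + j)))
      + (\<Sum>j=0..r+2. a ^ j * ((q + j) choose q) * ((q + (r+2) - j) choose (q + j))) + (\<Sum>j=0..r+2. T j)"
    by (simp add: sum.distrib)
  also have "(\<Sum>j=0..r+2. a ^ j * ((Suc q + j) choose Suc q) * ((Suc q + (r+1) - j) choose (Suc q + j))) = E a (Suc q) (r+1)"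
    by (subst E_ext[of _ "r+2"]) auto
  also have "(\<Sum>j=0..r+2. a ^ j * ((q + j) choose q) * ((q + (r+2) - j) choose (q + j))) = E a q (r+2)"
    by (subst E_ext[of _ "r+2"]) auto
  also have "(\<Sum>j=0..r+2. T j) = (\<Sum>j=Suc 0..Suc (r+1). T j)"
    by (simp add: sum.atLeast_Suc_atMost T_def)
  also have "\<dots> = (\<Sum>i=0..r+1. T (Suc i))"
    by (rule sum.shift_bounds_cl_Suc_ivl)
  also have "\<dots> = (\<Sum>i=0..r+1. a * (a ^ i * ((Suc q + i) choose Suc q) * ((Suc q + r - i) choose (Suc q + i))))"
  proof (rule sum.cong)
    fix i assume "i \<in> {0..r+1}"
    then have "q + r + 2 - Suc i = Suc q + r - i" by auto
    then show "T (Suc i) = a * (a ^ i * ((Suc q + i) choose Suc q) * ((Suc q + r - i) choose (Suc q + i)))"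
      by (simp add: T_def)
  qed simp
  also have "\<dots> = a * E a (Suc q) r"
  proof -
    have "E a (Suc q) r = (\<Sum>i=0..r+1. a ^ i * ((Suc q + i) choose Suc q) * ((Suc q + r - i) choose (Suc q + i)))"
      by (rule E_ext) simp
    then show ?thesis by (simp only: sum_distrib_left)
  qed
  finally show ?thesis by simp
qed

lemma cc_E: "cc (f a) (2*p+2+r) (Suc p) = E a p r"
proof (induction p arbitrary: r)
  case 0
  show ?case
  proof (induction r rule: less_induct)
    case (less r)
    show ?case
    proof (cases r)
      case 0
      then show ?thesis using cc_rec[of a 0 0] by simp
    next
      case (Suc r1)
      show ?thesis
      proof (cases r1)
        case 0
        then show ?thesis using Suc cc_rec[of a 1 0] cc_rec[of a 0 0] by simp
      next
        case (Suc r2)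
        have "cc (f a) (2*0+2+r) (Suc 0) = cc (f a) (2*0+2+(r2+1)) (Suc 0) + a * cc (f a) (2*0+2+r2) (Suc 0) + cc (f a) (r2+2) 0"
          using cc_rec[of a "r2+2" 0] \<open>r = Suc r1\<close> Suc by (simp add: add.commute add.left_commute)
        also have "\<dots> = E a 0 (r2+1) + a * E a 0 r2"
          using less \<open>r = Suc r1\<close> Suc by simp
        also have "\<dots> = E a 0 r" using E_rec0[of a r2] \<open>r = Suc r1\<close> Suc by simp
        finally show ?thesis .
      qed
    qed
  qed
next
  case (Suc q)
  show ?case
  proof (induction r rule: less_induct)
    case (less r)
    show ?case
    proof (cases r)
      case 0
      have "cc (f a) (2*Suc q+2+r) (Suc (Suc q)) = cc (f a) (Suc (2*q+2)) (Suc (Suc q)) + a * cc (f a) (2*q+2) (Suc (Suc q)) + cc (f a) (2*q+2) (Suc q)"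
        using cc_rec[of a "2*q+2" "Suc q"] 0 by (simp add: algebra_simps)
      also have "\<dots> = E a q 0" using Suc.IH[of 0] by (simp add: cc_small)
      finally show ?thesis using 0 by simp
    next
      case (Suc r1)
      show ?thesis
      proof (cases r1)
        case 0
        have "cc (f a) (2*Suc q+2+r) (Suc (Suc q)) = cc (f a) (2*Suc q+2+0) (Suc (Suc q)) + a * cc (f a) (Suc (2*q+2)) (Suc (Suc q)) + cc (f a) (Suc (2*q+2)) (Suc q)"
          using cc_rec[of a "Suc (2*q+2)" "Suc q"] 0 \<open>r = Suc r1\<close> by (simp add: algebra_simps)
        also have "\<dots> = E a (Suc q) 0 + E a q 1" using Suc.IH[of 1] less[of 0] \<open>r = Suc r1\<close>
          by (simp add: cc_small numeral_3_eq_3)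
        finally show ?thesis using 0 \<open>r = Suc r1\<close> by simp
      next
        case (Suc r2)
        have "cc (f a) (2*Suc q+2+r) (Suc (Suc q)) = cc (f a) (2*Suc q+2+(r2+1)) (Suc (Suc q)) + a * cc (f a) (2*Suc q+2+r2) (Suc (Suc q)) + cc (f a) (2*q+2+(r2+2)) (Suc q)"
          using cc_rec[of a "2*q+4+r2" "Suc q"] \<open>r = Suc r1\<close> Suc by (simp add: algebra_simps numeral_eq_Suc)
        also have "\<dots> = E a (Suc q) (r2+1) + a * E a (Suc q) r2 + E a q (r2+2)"
          using less[of "r2+1"] less[of r2] Suc.IH[of "r2+2"] \<open>r = Suc r1\<close> Suc by simp
        also have "\<dots> = E a (Suc q) r" using E_rec[of a q r2] \<open>r = Suc r1\<close> Suc by simp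
        finally show ?thesis .
      qed
    qed
  qed
qed


definition iso :: "nat list \<Rightarrow> bool" where
  "iso w = (\<forall>i. Suc i < length w \<longrightarrow> w ! i = 0 \<or> w ! Suc i = 0)"

lemma iso_Nil[simp]: "iso []" and iso_single[simp]: "iso [x]"
  by (auto simp: iso_def)

lemma iso_CC[simp]: "iso (x#y#w) = ((x=0 \<or> y=0) \<and> iso (y#w))"
  unfolding iso_def
  apply (rule iffI)
   apply (intro conjI)
    apply (erule allE[of _ 0]) apply simp
   apply (intro allI impI) subgoal for i by (erule allE[of _ "Suc i"]) simp
  apply (intro allI impI) subgoal for i by (cases i) auto
  done

lemma iso_0[simp]: "iso (0#w) = iso w"
  by (cases w) auto

lemma words_iso: "words m L j = {w. length w = L \<and> set w \<subseteq> {0..m} \<and> count_list w 1 = j \<and> iso w}"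
  by (simp add: words_def iso_def)

lemma words_finite: "finite (words m L j)"
proof (rule finite_subset)
  show "words m L j \<subseteq> {w. set w \<subseteq> {0..m} \<and> length w = L}" by (auto simp: words_def)
  show "finite {w. set w \<subseteq> {0..m} \<and> length w = L}" by (rule finite_lists_length_eq) simp
qed

lemma words_SS: assumes "m \<ge> 1" shows "words m (Suc (Suc L)) j =
   Cons 0 ` words m (Suc L) j \<union> (\<lambda>(x,w). x#0#w) ` ({2..m} \<times> words m L j)
   \<union> (if j = 0 then {} else (\<lambda>w. 1#0#w) ` words m L (j-1))"
proof (intro equalityI subsetI)
  fix w assume w: "w \<in> words m (Suc (Suc L)) j"
  then obtain x y t where xyt: "w = x#y#t" unfolding words_iso
    by (auto simp: length_Suc_conv)
  show "w \<in> Cons 0 ` words m (Suc L) j \<union> (\<lambda>(x,w). x#0#w) ` ({2..m} \<times> words m L j)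
   \<union> (if j = 0 then {} else (\<lambda>w. 1#0#w) ` words m L (j-1))"
  proof (cases "x = 0")
    case True
    then have "y#t \<in> words m (Suc L) j" using w xyt by (auto simp: words_iso)
    then show ?thesis using xyt True by auto
  next
    case False
    then have y: "y = 0" using w xyt by (auto simp: words_iso)
    show ?thesis
    proof (cases "x = 1")
      case True
      then have "j \<noteq> 0" "t \<in> words m L (j-1)" using w xyt y by (auto simp: words_iso)
      then show ?thesis using xyt True y by auto
    next
      case False
      then have "x \<in> {2..m}" "t \<in> words m L j" using w xyt y \<open>x \<noteq> 0\<close> by (auto simp: words_iso)
      then show ?thesis using xyt y by force
    qed
  qed
next
  fix w assume "w \<in> Cons 0 ` words m (Suc L) j \<union> (\<lambda>(x,w). x#0#w) ` ({2..m} \<times> words m L j)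
   \<union> (if j = 0 then {} else (\<lambda>w. 1#0#w) ` words m L (j-1))"
  then show "w \<in> words m (Suc (Suc L)) j"
    using assms by (cases "j = 0") (auto simp: words_iso subset_iff)
qed

lemma card_words_SS: assumes "m \<ge> 1" shows "card (words m (Suc (Suc L)) j) =
   card (words m (Suc L) j) + (m - 1) * card (words m L j) + (if j = 0 then 0 else card (words m L (j-1)))"
proof -
  have c1: "card (Cons 0 ` words m (Suc L) j) = card (words m (Suc L) j)"
    by (rule card_image) simp
  have c2: "card ((\<lambda>(x,w). x#0#w) ` ({2..m} \<times> words m L j)) = (m - 1) * card (words m L j)"
    by (subst card_image) (auto simp: inj_on_def card_cartesian_product)
  have c3: "card ((\<lambda>w. 1#0#w) ` words m L (j-1)) = card (words m L (j-1))"
    by (rule card_image) (simp add: inj_on_def)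
  have fin: "finite (Cons 0 ` words m (Suc L) j)" "finite ((\<lambda>(x,w). x#0#w) ` ({2..m} \<times> words m L j))"
    "finite ((\<lambda>w. 1#0#w) ` words m L (j-1))"
    by (auto simp: words_finite)
  show ?thesis
  proof (cases "j = 0")
    case True
    then show ?thesis unfolding words_SS[OF assms] using c1 c2 fin
      by (simp, subst card_Un_disjoint) auto
  next
    case False
    then show ?thesis unfolding words_SS[OF assms] using c1 c2 c3 fin
      by (subst card_Un_disjoint, simp, simp, force)+ simp
  qed
qed

lemma card_words_0: "card (words m 0 j) = (if j = 0 then 1 else 0)"
proof -
  have "words m 0 j = (if j = 0 then {[]} else {})" by (auto simp: words_def)
  then show ?thesis by simp
qed

lemma card_words_1: assumes "m \<ge> 1"
  shows "card (words m (Suc 0) j) = (if j = 0 then m else if j = 1 then 1 else 0)"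
proof -
  have "words m (Suc 0) j = (\<lambda>x. [x]) ` {x \<in> {0..m}. (if x = 1 then 1 else 0) = j}"
    by (auto simp: words_def length_Suc_conv)
  moreover have "\<And>S. card ((\<lambda>x::nat. [x]) ` S) = card S"
    by (rule card_image) (simp add: inj_on_def)
  ultimately have e: "card (words m (Suc 0) j) = card {x \<in> {0..m}. (if x = 1 then 1 else 0) = j}"
    by presburger
  show ?thesis
  proof (cases "j = 0")
    case True
    then have "{x \<in> {0..m}. (if x = 1 then 1 else 0) = j} = {0..m} - {1}" by auto
    then show ?thesis using e True assms by simp
  next
    case False
    then have "{x \<in> {0..m}. (if x = 1 then 1 else 0) = j} = (if j = 1 then {1} else {})"
      using assms by auto
    then show ?thesis using e False by simp
  qed
qed

lemma words_cc: assumes "m \<ge> 1"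
  shows "card (words m L j) = cc (f (m-1)) (L+3) (Suc j)"
proof (induction L arbitrary: j rule: less_induct)
  case (less L)
  define a where "a = m - 1"
  have m: "m = Suc a" using assms a_def by simp
  show ?case
  proof (cases L)
    case 0
    show ?thesis
    proof (cases j)
      case 0 then show ?thesis using \<open>L = 0\<close> cc_E[of a 0 1] by (simp add: card_words_0 a_def numeral_3_eq_3)
    next
      case (Suc j') then show ?thesis using \<open>L = 0\<close> cc_small[of 3 "Suc j" a] by (simp add: card_words_0 a_def)
    qed
  next
    case (Suc L1)
    show ?thesis
    proof (cases L1)
      case 0
      have "cc (f a) 4 (Suc 0) = m" using cc_E[of a 0 2] E_rec0[of a 0] m by (simp add: numeral_eq_Suc)
      moreover have "cc (f a) 4 (Suc (Suc 0)) = 1" using cc_E[of a 1 0] by (simp add: numeral_eq_Suc)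
      moreover have "j \<ge> 2 \<Longrightarrow> cc (f a) 4 (Suc j) = 0" by (rule cc_small) simp
      ultimately show ?thesis using \<open>L = Suc L1\<close> 0 card_words_1[OF assms, of j] a_def
        by (auto simp: numeral_eq_Suc)
    next
      case (Suc L2)
      have r: "cc (f a) (L2+3+2) (Suc j) = cc (f a) (L2+3+1) (Suc j) + a * cc (f a) (L2+3) (Suc j) + cc (f a) (L2+3) j"
        by (rule cc_rec)
      have "card (words m L j) = card (words m (Suc L2) j) + (m - 1) * card (words m L2 j) + (if j = 0 then 0 else card (words m L2 (j-1)))"
        using \<open>L = Suc L1\<close> Suc card_words_SS[OF assms] by simp
      also have "\<dots> = cc (f a) (L2+3+1) (Suc j) + a * cc (f a) (L2+3) (Suc j) + cc (f a) (L2+3) j"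
        using less[of "Suc L2" j] less[of L2 j] less[of L2 "j-1"] \<open>L = Suc L1\<close> Suc a_def
        by (cases j) auto
      also have "\<dots> = cc (f (m-1)) (L+3) (Suc j)" using r \<open>L = Suc L1\<close> Suc a_def by simp
      finally show ?thesis .
    qed
  qed
qed


theorem corollary29:
  fixes m :: nat
  assumes "m \<ge> 1"
  shows "(\<forall>n k. n > 3 \<and> 1 \<le> k \<and> k \<le> n div 2 \<longrightarrow> c m n k = card (words m (n - 3) (k - 1)))
    \<and> (\<forall>n k. 1 \<le> k \<and> k \<le> n div 2 \<longrightarrow>
         c m n k = (\<Sum>j = 0..n div 2 - k. (m - 1) ^ j * ((j + k - 1) choose (k - 1)) * ((n - k - j - 1) choose (k + j - 1))))
    \<and> (\<forall>n k. n div 2 < k \<and> k \<le> n \<longrightarrow> c m n k = 0)"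
proof (intro conjI allI impI)
  fix n k :: nat assume h: "3 < n \<and> 1 \<le> k \<and> k \<le> n div 2"
  then have "card (words m (n - 3) (k - 1)) = cc (f (m-1)) (n - 3 + 3) (Suc (k - 1))"
    using words_cc[OF assms] by blast
  then show "c m n k = card (words m (n - 3) (k - 1))" using h by (simp add: c_def)
next
  fix n k :: nat assume h: "1 \<le> k \<and> k \<le> n div 2"
  define p where "p = k - 1"
  define r where "r = n - 2 * k"
  have k: "k = Suc p" using h p_def by simp
  have n: "n = 2 * p + 2 + r" using h k r_def by simp
  have d: "n div 2 - k = r div 2" using n k by simp
  have "c m n k = E (m-1) p r" using cc_E[of "m-1" p r] n k by (simp add: c_def)
  also have "\<dots> = (\<Sum>j = 0..n div 2 - k. (m - 1) ^ j * ((j + k - 1) choose (k - 1)) * ((n - k - j - 1) choose (k + j - 1)))"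
    unfolding E_def d
  proof (rule sum.cong)
    fix j assume "j \<in> {0..r div 2}"
    then have "n - k - j - 1 = p + r - j" using n k by auto
    then show "(m - 1) ^ j * (p + j choose p) * (p + r - j choose (p + j)) =
      (m - 1) ^ j * ((j + k - 1) choose (k - 1)) * ((n - k - j - 1) choose (k + j - 1))"
      using k by (simp add: add.commute)
  qed simp
  finally show "c m n k = (\<Sum>j = 0..n div 2 - k. (m - 1) ^ j * ((j + k - 1) choose (k - 1)) * ((n - k - j - 1) choose (k + j - 1)))" .
next
  fix n k :: nat assume h: "n div 2 < k \<and> k \<le> n"
  then have "n < 2 * k" by linarith
  then show "c m n k = 0" by (simp add: c_def cc_small)
qed

end
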